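(* For all $n,k\in\mathbb{N}$, there is a set $S$ of $n$ polygonal curves in $\mathbb{R}^1$ with $k$ vertices each such that the Voronoi diagram of $S$ under the discrete Fréchet distance has at least $\lfloor n/k\rfloor^k$ Voronoi regions, i.e. there are at least $\lfloor n/k\rfloor^k$ query curves $Q$ (with $k$ vertices in $\mathbb{R}^1$) whose nearest-neighbor sets $N_S(Q)$ are pairwise distinct.
   Context: A polygonal curve in $\mathbb{R}^d$ with $k$ vertices is a sequence $P=(p_1,\dots,p_k)$ of points of $\mathbb{R}^d$. The discrete Fréchet distance between $P=(p_1,\dots,p_k)$ and $Q=(q_1,\dots,q_l)$ is $\min_{C}\max_{(i,j)\in C}\|p_i-q_j\|$, where $C$ ranges over sequences $(i_1,j_1),\dots,(i_t,j_t)$ with $(i_1,j_1)=(1,1)$, $(i_t,j_t)=(k,l)$, and each step $(i_{s+1},j_{s+1})\in\{(i_s+1,j_s),(i_s,j_s+1),(i_s+1,j_s+1)\}$. For a finite set $S$ of curves and a query curve $Q$, $N_S(Q)$ is the set of curves in $S$ at minimum discrete Fréchet distance from $Q$. A Voronoi region of $S$ is a nonempty set of query curves sharing a common nearest-neighbor set $N_S(Q)$. *)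

theory Defs
  imports Main "HOL.Real"
begin

text \<open>Polygonal curves in R^1 are lists of reals; a curve with k vertices is a list of
length k. Indices are 0-based: P = [p_0, ..., p_(k-1)].\<close>

type_synonym curve = "real list"

definition couplings :: "nat \<Rightarrow> nat \<Rightarrow> (nat \<times> nat) list set" where
  "couplings k l = {C. C \<noteq> [] \<and> hd C = (0, 0) \<and> last C = (k - 1, l - 1) \<and>
     (\<forall>s. Suc s < length C \<longrightarrow>
        C ! Suc s \<in> {(fst (C ! s) + 1, snd (C ! s)),
                      (fst (C ! s), snd (C ! s) + 1),
                      (fst (C ! s) + 1, snd (C ! s) + 1)})}"

definition dfd :: "curve \<Rightarrow> curve \<Rightarrow> real" where
  "dfd P Q = Inf {Max ((\<lambda>(i, j). \<bar>P ! i - Q ! j\<bar>) ` set C) | C.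
                   C \<in> couplings (length P) (length Q)}"

definition NN :: "curve set \<Rightarrow> curve \<Rightarrow> curve set" where
  "NN S Q = {P \<in> S. \<forall>P' \<in> S. dfd P Q \<le> dfd P' Q}"

definition voronoi_regions :: "curve set \<Rightarrow> nat \<Rightarrow> curve set set" where
  "voronoi_regions S k =
     {{Q. length Q = k \<and> NN S Q = N} | N. \<exists>Q. length Q = k \<and> NN S Q = N}"

end

theory Submission
  imports Defs
begin


lemma list_cover:
  fixes xs :: "nat list"
  shows "xs \<noteq> [] \<Longrightarrow> (\<forall>s. Suc s < length xs \<longrightarrow> xs!(Suc s) \<le> xs!s + 1) \<Longrightarrow>
    hd xs \<le> i \<Longrightarrow> i \<le> last xs \<Longrightarrow> i \<in> set xs"
proof (induction xs)
  case Nil then show ?case by simp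
next
  case (Cons a xs)
  show ?case
  proof (cases "xs = [] \<or> i = a")
    case True then show ?thesis using Cons.prems by auto
  next
    case False
    then have ne: "xs \<noteq> []" and ia: "i \<noteq> a" by auto
    have st: "\<forall>s. Suc s < length xs \<longrightarrow> xs!(Suc s) \<le> xs!s + 1"
      using Cons.prems(2) by (metis Suc_less_eq length_Cons nth_Cons_Suc)
    have "(a#xs)!1 \<le> (a#xs)!0 + 1" using Cons.prems(2) ne
      by (metis One_nat_def length_Cons length_greater_0_conv Suc_less_eq)
    then have "hd xs \<le> a + 1" using ne by (simp add: hd_conv_nth)
    moreover have "a < i" using Cons.prems(3) ia by simp
    ultimately have "hd xs \<le> i" by simp
    moreover have "i \<le> last xs" using Cons.prems(4) ne by simp
    ultimately show ?thesis using Cons.IH[OF ne st] by simp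
  qed
qed

lemma list_le_last:
  fixes xs :: "nat list"
  shows "(\<forall>s. Suc s < length xs \<longrightarrow> xs!s \<le> xs!(Suc s)) \<Longrightarrow> x \<in> set xs \<Longrightarrow> x \<le> last xs"
proof (induction xs arbitrary: x)
  case Nil then show ?case by simp
next
  case (Cons a xs)
  show ?case
  proof (cases "xs = []")
    case True then show ?thesis using Cons.prems by auto
  next
    case ne: False
    have st: "\<forall>s. Suc s < length xs \<longrightarrow> xs!s \<le> xs!(Suc s)"
      using Cons.prems(1) by (metis Suc_less_eq length_Cons nth_Cons_Suc)
    have "(a#xs)!0 \<le> (a#xs)!1" using Cons.prems(1) ne
      by (metis One_nat_def length_Cons length_greater_0_conv Suc_less_eq)
    then have "a \<le> hd xs" using ne by (simp add: hd_conv_nth)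
    also have "hd xs \<le> last xs" using Cons.IH[OF st] ne by (simp add: hd_in_set)
    finally have al: "a \<le> last xs" .
    from Cons.prems(2) have "x = a \<or> x \<in> set xs" by simp
    then show ?thesis
    proof
      assume "x = a" then show ?thesis using al ne by simp
    next
      assume "x \<in> set xs" then show ?thesis using Cons.IH[OF st] ne by simp
    qed
  qed
qed

lemma coupling_step:
  assumes "C \<in> couplings k l" "Suc s < length C"
  shows "fst (C!s) \<le> fst (C!Suc s) \<and> fst (C!Suc s) \<le> fst (C!s) + 1 \<and>
         snd (C!s) \<le> snd (C!Suc s) \<and> snd (C!Suc s) \<le> snd (C!s) + 1"
proof -
  have "C ! Suc s \<in> {(fst (C ! s) + 1, snd (C ! s)),
                      (fst (C ! s), snd (C ! s) + 1),
                      (fst (C ! s) + 1, snd (C ! s) + 1)}"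
    using assms unfolding couplings_def by blast
  then show ?thesis by (cases "C!s"; cases "C!Suc s") auto
qed

lemma coupling_basic:
  assumes "C \<in> couplings k l"
  shows "C \<noteq> []" "hd C = (0,0)" "last C = (k-1, l-1)"
  using assms unfolding couplings_def by blast+

lemma coupling_bounds:
  assumes "C \<in> couplings k l" "(i,j) \<in> set C"
  shows "i \<le> k - 1" "j \<le> l - 1"
proof -
  have m1: "i \<in> set (map fst C)" using assms(2) by (metis fst_conv image_eqI set_map)
  have s1: "\<forall>s. Suc s < length (map fst C) \<longrightarrow> (map fst C)!s \<le> (map fst C)!(Suc s)"
    using coupling_step[OF assms(1)] by simp
  have "i \<le> last (map fst C)" using list_le_last[OF s1 m1] .
  then show "i \<le> k - 1" using coupling_basic[OF assms(1)] by (simp add: last_map)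
  have m2: "j \<in> set (map snd C)" using assms(2) by (metis snd_conv image_eqI set_map)
  have s2: "\<forall>s. Suc s < length (map snd C) \<longrightarrow> (map snd C)!s \<le> (map snd C)!(Suc s)"
    using coupling_step[OF assms(1)] by simp
  have "j \<le> last (map snd C)" using list_le_last[OF s2 m2] .
  then show "j \<le> l - 1" using coupling_basic[OF assms(1)] by (simp add: last_map)
qed

lemma coupling_cover:
  assumes "C \<in> couplings k l" "i \<le> k - 1"
  shows "\<exists>j. (i,j) \<in> set C"
proof -
  have s1: "\<forall>s. Suc s < length (map fst C) \<longrightarrow> (map fst C)!(Suc s) \<le> (map fst C)!s + 1"
    using coupling_step[OF assms(1)] by simp
  have ne: "map fst C \<noteq> []" using coupling_basic[OF assms(1)] by simp
  have h: "hd (map fst C) \<le> i" using coupling_basic[OF assms(1)] by (simp add: hd_map)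
  have l: "i \<le> last (map fst C)"
    using coupling_basic[OF assms(1)] assms(2) by (simp add: last_map)
  have "i \<in> set (map fst C)" using list_cover[OF ne s1 h l] .
  then show ?thesis by auto
qed

lemma diag_coupling:
  assumes "k \<ge> 1"
  shows "map (\<lambda>j. (j,j)) [0..<k] \<in> couplings k k"
proof -
  let ?D = "map (\<lambda>j. (j,j)) [0..<k]"
  have ne: "?D \<noteq> []" using assms by simp
  have h: "hd ?D = (0,0)" using assms by (simp add: hd_map hd_upt)
  have l: "last ?D = (k-1,k-1)" using assms by (simp add: last_map)
  have st: "\<forall>s. Suc s < length ?D \<longrightarrow>
        ?D ! Suc s \<in> {(fst (?D ! s) + 1, snd (?D ! s)),
                      (fst (?D ! s), snd (?D ! s) + 1),
                      (fst (?D ! s) + 1, snd (?D ! s) + 1)}" by simp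
  show ?thesis unfolding couplings_def using ne h l st by blast
qed



lemma max_ge_elem:
  assumes "p \<in> set C"
  shows "(\<lambda>(i,j). \<bar>P!i - Q!j\<bar>) p \<le> Max ((\<lambda>(i,j). \<bar>P!i - Q!j\<bar>) ` set (C::(nat\<times>nat) list))"
  using assms by (intro Max_ge) auto

lemma dfd_le:
  assumes "C \<in> couplings (length P) (length Q)"
  shows "dfd P Q \<le> Max ((\<lambda>(i,j). \<bar>P!i - Q!j\<bar>) ` set C)"
  unfolding dfd_def
proof (rule cInf_lower)
  show "Max ((\<lambda>(i,j). \<bar>P!i - Q!j\<bar>) ` set C) \<in> {Max ((\<lambda>(i, j). \<bar>P ! i - Q ! j\<bar>) ` set C) |C.
       C \<in> couplings (length P) (length Q)}" using assms by blast
  show "bdd_below {Max ((\<lambda>(i, j). \<bar>P ! i - Q ! j\<bar>) ` set C) |C.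
       C \<in> couplings (length P) (length Q)}"
  proof (rule bdd_belowI[of _ 0])
    fix x assume "x \<in> {Max ((\<lambda>(i, j). \<bar>P ! i - Q ! j\<bar>) ` set C) |C.
       C \<in> couplings (length P) (length Q)}"
    then obtain C' where C': "C' \<in> couplings (length P) (length Q)"
      and x: "x = Max ((\<lambda>(i, j). \<bar>P ! i - Q ! j\<bar>) ` set C')" by blast
    have "C' \<noteq> []" using coupling_basic[OF C'] by simp
    then obtain p where p: "p \<in> set C'" by (cases C') auto
    have "0 \<le> (\<lambda>(i,j). \<bar>P!i - Q!j\<bar>) p" by (cases p) auto
    also have "\<dots> \<le> x" unfolding x by (rule max_ge_elem[OF p])
    finally show "0 \<le> x" .
  qed
qed

lemma dfd_ge:
  assumes "couplings (length P) (length Q) \<noteq> {}"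
    and "\<And>C. C \<in> couplings (length P) (length Q) \<Longrightarrow> \<exists>p\<in>set C. b \<le> (\<lambda>(i,j). \<bar>P!i - Q!j\<bar>) p"
  shows "b \<le> dfd P Q"
  unfolding dfd_def
proof (rule cInf_greatest)
  show "{Max ((\<lambda>(i, j). \<bar>P ! i - Q ! j\<bar>) ` set C) |C.
       C \<in> couplings (length P) (length Q)} \<noteq> {}" using assms(1) by blast
  fix x assume "x \<in> {Max ((\<lambda>(i, j). \<bar>P ! i - Q ! j\<bar>) ` set C) |C.
       C \<in> couplings (length P) (length Q)}"
  then obtain C' where C': "C' \<in> couplings (length P) (length Q)"
    and x: "x = Max ((\<lambda>(i, j). \<bar>P ! i - Q ! j\<bar>) ` set C')" by blast
  obtain p where p: "p \<in> set C'" and b: "b \<le> (\<lambda>(i,j). \<bar>P!i - Q!j\<bar>) p" using assms(2)[OF C'] by blast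
  show "b \<le> x" unfolding x using b max_ge_elem[OF p, of P Q] by linarith
qed

definition stair :: "real \<Rightarrow> nat \<Rightarrow> (nat \<Rightarrow> real) \<Rightarrow> real list" where
  "stair H k x = map (\<lambda>j. x j + H * real j) [0..<k]"

lemma stair_length[simp]: "length (stair H k x) = k"
  by (simp add: stair_def)

lemma stair_nth[simp]: "j < k \<Longrightarrow> stair H k x ! j = x j + H * real j"
  by (simp add: stair_def)

lemma stair_upper:
  assumes "k \<ge> 1" "\<forall>j<k. \<bar>x j - y j\<bar> \<le> r"
  shows "dfd (stair H k x) (stair H k y) \<le> r"
proof -
  let ?D = "map (\<lambda>j. (j,j)) [0..<k]"
  have D: "?D \<in> couplings (length (stair H k x)) (length (stair H k y))"
    using diag_coupling[OF assms(1)] by simp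
  have "Max ((\<lambda>(i,j). \<bar>stair H k x!i - stair H k y!j\<bar>) ` set ?D) \<le> r"
  proof (subst Max_le_iff)
    show "finite ((\<lambda>(i,j). \<bar>stair H k x!i - stair H k y!j\<bar>) ` set ?D)" by simp
    show "(\<lambda>(i,j). \<bar>stair H k x!i - stair H k y!j\<bar>) ` set ?D \<noteq> {}" using assms(1) by simp
    show "\<forall>a\<in>(\<lambda>(i,j). \<bar>stair H k x!i - stair H k y!j\<bar>) ` set ?D. a \<le> r"
      using assms(2) by auto
  qed
  then show ?thesis using dfd_le[OF D] by linarith
qed

lemma stair_lower:
  assumes "k \<ge> 1" "\<forall>j<k. \<bar>x j\<bar> \<le> K \<and> \<bar>y j\<bar> \<le> K" "4 * K < H" "i < k"
  shows "\<bar>x i - y i\<bar> \<le> dfd (stair H k x) (stair H k y)"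
proof (rule dfd_ge)
  show "couplings (length (stair H k x)) (length (stair H k y)) \<noteq> {}"
    using diag_coupling[OF assms(1)] by auto
  fix C assume C0: "C \<in> couplings (length (stair H k x)) (length (stair H k y))"
  then have C: "C \<in> couplings k k" by simp
  obtain l where l: "(i,l) \<in> set C" using coupling_cover[OF C] assms(4) by fastforce
  have lk: "l < k" using coupling_bounds(2)[OF C l] assms(1) by linarith
  have "\<bar>x i - y i\<bar> \<le> \<bar>stair H k x ! i - stair H k y ! l\<bar>"
  proof (cases "l = i")
    case True then show ?thesis using assms(4) by simp
  next
    case False
    have d: "1 \<le> \<bar>real i - real l\<bar>" using False by linarith
    have K0: "0 \<le> K" using assms(2) assms(1) by force
    have H0: "0 < H" using K0 assms(3) by linarith
    have "H \<le> H * \<bar>real i - real l\<bar>" using d H0 by simp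
    also have "\<dots> = \<bar>H * (real i - real l)\<bar>" using H0 by (simp add: abs_mult)
    finally have hh: "H \<le> \<bar>H * (real i - real l)\<bar>" .
    have b1: "\<bar>x i\<bar> \<le> K" "\<bar>y i\<bar> \<le> K" "\<bar>y l\<bar> \<le> K" using assms(2) assms(4) lk by auto
    have eq: "stair H k x ! i - stair H k y ! l = (x i - y l) + H * (real i - real l)"
      using assms(4) lk by (simp add: algebra_simps)
    show ?thesis unfolding eq using hh b1 assms(3) by linarith
  qed
  then show "\<exists>p\<in>set C. \<bar>x i - y i\<bar> \<le> (\<lambda>(i,j). \<bar>stair H k x!i - stair H k y!j\<bar>) p"
    using l by force
qed



lemma count_regions:
  assumes "finite S" "\<forall>t\<in>T. length (F t) = k" "inj_on (\<lambda>t. NN S (F t)) T"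
  shows "card T \<le> card (voronoi_regions S k)"
proof -
  let ?G = "\<lambda>N. {Q. length Q = k \<and> NN S Q = N}"
  let ?A = "NN S ` {Q. length Q = k}"
  have vr: "voronoi_regions S k = ?G ` ?A" unfolding voronoi_regions_def by blast
  have inj: "inj_on ?G ?A"
  proof (rule inj_onI)
    fix N1 N2 assume "N1 \<in> ?A" "N2 \<in> ?A" and eq: "?G N1 = ?G N2"
    then obtain Q where "length Q = k" "NN S Q = N1" by blast
    then have "Q \<in> ?G N2" using eq by blast
    then show "N1 = N2" using \<open>NN S Q = N1\<close> by simp
  qed
  have sub: "?A \<subseteq> Pow S" unfolding NN_def by blast
  have finA: "finite ?A" using finite_subset[OF sub] assms(1) by simp
  have "card T = card ((\<lambda>t. NN S (F t)) ` T)" using card_image[OF assms(3)] by simp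
  also have "\<dots> \<le> card ?A"
    by (rule card_mono[OF finA]) (use assms(2) in auto)
  also have "\<dots> = card (voronoi_regions S k)" unfolding vr using card_image[OF inj] by simp
  finally show ?thesis .
qed



lemma case_k1:
  fixes n :: nat
  shows "\<exists>S :: curve set. finite S \<and> card S = n \<and> (\<forall>P \<in> S. length P = 1) \<and>
           (n div 1) ^ 1 \<le> card (voronoi_regions S 1)"
proof -
  define H :: real where "H = 4 * real n + 1"
  define cur where "cur = (\<lambda>p::nat. stair H 1 (\<lambda>_. real p))"
  define S where "S = cur ` {..<n}"
  define T where "T = {xs. set xs \<subseteq> {..<n} \<and> length xs = (1::nat)}"
  define F where "F = (\<lambda>t::nat list. cur (t!0))"
  have bnd: "\<And>a b. a < n \<Longrightarrow> b < n \<Longrightarrow> \<forall>j<1. \<bar>(\<lambda>_. real a) j\<bar> \<le> real n \<and> \<bar>(\<lambda>_. real b) j\<bar> \<le> real n"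
    by simp
  have H4: "4 * real n < H" unfolding H_def by simp
  have low: "\<And>a b. a < n \<Longrightarrow> b < n \<Longrightarrow> \<bar>real a - real b\<bar> \<le> dfd (cur a) (cur b)"
  proof -
    fix a b assume a: "a < n" and b: "b < n"
    show "\<bar>real a - real b\<bar> \<le> dfd (cur a) (cur b)"
      unfolding cur_def using stair_lower[of 1 "\<lambda>_. real a" "real n" "\<lambda>_. real b" H 0] a b H4 by simp
  qed
  have up: "\<And>a. dfd (cur a) (cur a) \<le> 0"
    unfolding cur_def by (rule stair_upper) auto
  have injc: "inj_on cur {..<n}"
  proof (rule inj_onI)
    fix a b assume "a \<in> {..<n}" "b \<in> {..<n}" "cur a = cur b"
    then have "cur a ! 0 = cur b ! 0" by simp
    then show "a = b" unfolding cur_def by simp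
  qed
  have inNN: "\<And>a. a < n \<Longrightarrow> cur a \<in> NN S (cur a)"
  proof -
    fix a assume a: "a < n"
    have "\<forall>P'\<in>S. dfd (cur a) (cur a) \<le> dfd P' (cur a)"
    proof
      fix P' assume "P' \<in> S"
      then obtain b where b: "b < n" "P' = cur b" unfolding S_def by auto
      show "dfd (cur a) (cur a) \<le> dfd P' (cur a)" using low[OF b(1) a] up[of a] b(2) by force
    qed
    then show "cur a \<in> NN S (cur a)" unfolding NN_def S_def using a by auto
  qed
  have inj: "inj_on (\<lambda>t. NN S (F t)) T"
  proof (rule inj_onI)
    fix t t' assume t: "t \<in> T" and t': "t' \<in> T" and eq: "NN S (F t) = NN S (F t')"
    have a: "t!0 < n" and b: "t'!0 < n" using t t' unfolding T_def by (auto simp: subset_iff)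
    have "cur (t!0) \<in> NN S (F t')" using inNN[OF a] eq unfolding F_def by simp
    then have "dfd (cur (t!0)) (cur (t'!0)) \<le> dfd (cur (t'!0)) (cur (t'!0))"
      unfolding NN_def F_def S_def using b by auto
    then have "\<bar>real (t!0) - real (t'!0)\<bar> \<le> 0" using low[OF a b] up[of "t'!0"] by linarith
    then have e: "t!0 = t'!0" by simp
    have "length t = 1" "length t' = 1" using t t' unfolding T_def by auto
    then show "t = t'" using e by (intro nth_equalityI) auto
  qed
  have cT: "card T = n ^ 1" unfolding T_def using card_lists_length_eq[of "{..<n}" 1] by simp
  have "card T \<le> card (voronoi_regions S 1)"
    by (rule count_regions[OF _ _ inj]) (auto simp: S_def F_def cur_def)
  moreover have "card S = n" unfolding S_def using card_image[OF injc] by simp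
  moreover have "\<forall>P\<in>S. length P = 1" unfolding S_def cur_def by auto
  ultimately show ?thesis using cT by (intro exI[of _ S]) (auto simp: S_def)
qed



definition xv :: "nat \<Rightarrow> nat \<Rightarrow> nat \<Rightarrow> nat \<Rightarrow> real" where
  "xv k m p j = (if p < (k-1)*m then (if j = p div m then -(1 + real (p mod m)) else 0)
                 else (if j = 0 then real m + 1 + real (p - (k-1)*m) else 0))"

definition rr :: "nat \<Rightarrow> nat \<Rightarrow> nat list \<Rightarrow> real" where
  "rr k m t = (real m + 2 + real (t!(k-1)) + real (t!0)) / 2"

definition yv :: "nat \<Rightarrow> nat \<Rightarrow> nat list \<Rightarrow> nat \<Rightarrow> real" where
  "yv k m t j = (if j < k-1 then rr k m t - (1 + real (t!j)) else rr k m t)"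

definition box :: "nat \<Rightarrow> nat \<Rightarrow> nat \<Rightarrow> nat list \<Rightarrow> bool" where
  "box k m p t = (\<forall>j<k. \<bar>xv k m p j - yv k m t j\<bar> \<le> rr k m t)"

lemma rr_bounds:
  assumes "k \<ge> 1" "\<forall>j<k. t!j < m"
  shows "real m + 2 \<le> 2 * rr k m t" "2 * rr k m t \<le> 3 * real m" "0 < rr k m t"
proof -
  have a: "t!(k-1) < m" "t!0 < m" using assms by auto
  then have "real (t!(k-1)) + 1 \<le> real m" "real (t!0) + 1 \<le> real m" by linarith+
  then show "real m + 2 \<le> 2 * rr k m t" "2 * rr k m t \<le> 3 * real m" "0 < rr k m t"
    unfolding rr_def by auto
qed

lemma yv_small:
  assumes "k \<ge> 2" "\<forall>j<k. t!j < m" "j < k"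
  shows "\<bar>yv k m t j\<bar> \<le> rr k m t"
proof (cases "j < k - 1")
  case True
  have "t!j < m" using assms by auto
  then have "real (t!j) + 1 \<le> real m" by linarith
  then show ?thesis using True rr_bounds[of k t m] assms unfolding yv_def by auto
next
  case False
  then show ?thesis using rr_bounds[of k t m] assms unfolding yv_def by auto
qed

lemma xv_L:
  assumes "k \<ge> 2" "i < k - 1" "c < m"
  shows "i*m + c < (k-1)*m" "xv k m (i*m+c) j = (if j = i then -(1 + real c) else 0)"
proof -
  have "i*m + c < i*m + m" using assms by simp
  also have "\<dots> = (i+1)*m" by simp
  also have "\<dots> \<le> (k-1)*m" using assms by (intro mult_right_mono) auto
  finally show lt: "i*m + c < (k-1)*m" .
  have "(i*m+c) div m = i" "(i*m+c) mod m = c" using assms by auto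
  then show "xv k m (i*m+c) j = (if j = i then -(1 + real c) else 0)"
    unfolding xv_def using lt by simp
qed

lemma xv_R:
  assumes "k \<ge> 2"
  shows "xv k m ((k-1)*m + c) j = (if j = 0 then real m + 1 + real c else 0)"
  unfolding xv_def by simp

lemma box_L:
  assumes "k \<ge> 2" "\<forall>j<k. t!j < m" "i < k - 1" "c < m"
  shows "box k m (i*m+c) t \<longleftrightarrow> c \<le> t!i"
proof
  assume "box k m (i*m+c) t"
  then have "\<bar>xv k m (i*m+c) i - yv k m t i\<bar> \<le> rr k m t" unfolding box_def using assms by auto
  then have "\<bar>-(1 + real c) - (rr k m t - (1 + real (t!i)))\<bar> \<le> rr k m t"
    using xv_L[OF assms(1,3,4)] assms(3) unfolding yv_def by simp
  then show "c \<le> t!i" by linarith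
next
  assume ct: "c \<le> t!i"
  show "box k m (i*m+c) t" unfolding box_def
  proof (intro allI impI)
    fix j assume j: "j < k"
    show "\<bar>xv k m (i*m+c) j - yv k m t j\<bar> \<le> rr k m t"
    proof (cases "j = i")
      case True
      have "t!i < m" using assms by auto
      then have "real (t!i) + 1 \<le> real m" by linarith
      then show ?thesis using True xv_L[OF assms(1,3,4)] assms(3) ct rr_bounds[of k t m] assms(1,2)
        unfolding yv_def by auto
    next
      case False
      then show ?thesis using xv_L[OF assms(1,3,4)] yv_small[OF assms(1,2) j] by simp
    qed
  qed
qed

lemma box_R:
  assumes "k \<ge> 2" "\<forall>j<k. t!j < m" "c < m"
  shows "box k m ((k-1)*m+c) t \<longleftrightarrow> c \<le> t!(k-1)"
proof
  assume "box k m ((k-1)*m+c) t"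
  then have "\<bar>xv k m ((k-1)*m+c) 0 - yv k m t 0\<bar> \<le> rr k m t" unfolding box_def using assms by auto
  then have "\<bar>real m + 1 + real c - (rr k m t - (1 + real (t!0)))\<bar> \<le> rr k m t"
    using xv_R[OF assms(1)] assms(1) unfolding yv_def by simp
  then have "real c \<le> real (t!(k-1))" unfolding rr_def by (simp add: abs_le_iff field_simps)
  then show "c \<le> t!(k-1)" by simp
next
  assume ct: "c \<le> t!(k-1)"
  show "box k m ((k-1)*m+c) t" unfolding box_def
  proof (intro allI impI)
    fix j assume j: "j < k"
    show "\<bar>xv k m ((k-1)*m+c) j - yv k m t j\<bar> \<le> rr k m t"
    proof (cases "j = 0")
      case True
      have "0 < k - 1" using assms by simp
      then have e: "xv k m ((k-1)*m+c) j - yv k m t j = real m + 2 + real c + real (t!0) - rr k m t"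
        using True xv_R[OF assms(1)] unfolding yv_def by simp
      have "real c \<le> real (t!(k-1))" using ct by simp
      then have "real m + 2 + real c + real (t!0) \<le> 2 * rr k m t" unfolding rr_def by simp
      then show ?thesis unfolding e by (simp add: abs_le_iff)
    next
      case False
      then show ?thesis using xv_R[OF assms(1)] yv_small[OF assms(1,2) j] by simp
    qed
  qed
qed



lemma xv_last0:
  assumes "k \<ge> 2" "p < (k-1)*m \<or> True"
  shows "xv k m p (k-1) = 0"
proof (cases "p < (k-1)*m")
  case True
  then have "p div m < k - 1" by (simp add: less_mult_imp_div_less)
  then show ?thesis using True unfolding xv_def by simp
next
  case False then show ?thesis using assms unfolding xv_def by simp
qed

lemma xv_bound:
  assumes "p < n" "m \<le> n"
  shows "\<bar>xv k m p j\<bar> \<le> 3 * real n + 2"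
proof (cases "p < (k-1)*m")
  case True
  then have "m > 0" by (cases m) auto
  then have "p mod m < m" by simp
  then have "real (p mod m) \<le> real n" using assms by linarith
  then show ?thesis using True unfolding xv_def by auto
next
  case False
  have "p - (k-1)*m \<le> n" using assms by linarith
  then have "real (p - (k-1)*m) \<le> real n" by linarith
  moreover have "real m \<le> real n" using assms by simp
  ultimately show ?thesis using False unfolding xv_def by (auto simp del: of_nat_diff)
qed

lemma yv_bound:
  assumes "k \<ge> 2" "\<forall>j<k. t!j < m" "m \<le> n"
  shows "\<bar>yv k m t j\<bar> \<le> 3 * real n + 2"
proof -
  have r: "0 < rr k m t" "2 * rr k m t \<le> 3 * real m" using rr_bounds[of k t m] assms by auto
  have mn: "real m \<le> real n" using assms by simp
  show ?thesis
  proof (cases "j < k - 1")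
    case True
    then have "t!j < m" using assms by auto
    then have "real (t!j) \<le> real m" by linarith
    then show ?thesis using True r mn unfolding yv_def by (auto simp: abs_le_iff)
  next
    case False then show ?thesis using r mn unfolding yv_def by auto
  qed
qed

lemma xv_inj:
  assumes "k \<ge> 2" "\<forall>j<k. xv k m p j = xv k m p' j"
  shows "p = p'"
proof -
  have L0: "\<And>q. q < (k-1)*m \<Longrightarrow> xv k m q 0 \<le> 0" unfolding xv_def by auto
  have R0: "\<And>q. \<not> q < (k-1)*m \<Longrightarrow> xv k m q 0 > 0" unfolding xv_def by (auto simp del: of_nat_diff)
  have e0: "xv k m p 0 = xv k m p' 0" using assms by auto
  show ?thesis
  proof (cases "p < (k-1)*m")
    case pL: True
    show ?thesis
    proof (cases "p' < (k-1)*m")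
      case pL': True
      let ?i = "p div m"
      have i: "?i < k - 1" using pL by (simp add: less_mult_imp_div_less)
      have "xv k m p ?i = -(1 + real (p mod m))" using pL unfolding xv_def by simp
      moreover have "xv k m p ?i = xv k m p' ?i" using assms i by auto
      ultimately have ee: "xv k m p' ?i = -(1 + real (p mod m))" by simp
      have "p' div m = ?i"
      proof (rule ccontr)
        assume "p' div m \<noteq> ?i"
        then have "xv k m p' ?i = 0" using pL' unfolding xv_def by auto
        then show False using ee by simp
      qed
      moreover then have "p' mod m = p mod m" using ee pL' unfolding xv_def by simp
      ultimately show ?thesis by (metis div_mult_mod_eq)
    next
      case False then show ?thesis using L0[OF pL] R0[OF False] e0 by simp
    qed
  next
    case pR: False
    show ?thesis
    proof (cases "p' < (k-1)*m")
      case True then show ?thesis using L0[OF True] R0[OF pR] e0 by simp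
    next
      case pR': False
      have "real (p - (k-1)*m) = real (p' - (k-1)*m)" using e0 pR pR' unfolding xv_def by simp
      then have "p - (k-1)*m = p' - (k-1)*m" by simp
      then show ?thesis using pR pR' by simp
    qed
  qed
qed



lemma case_k2:
  fixes n k :: nat
  assumes k2: "k \<ge> 2"
  shows "\<exists>S :: curve set. finite S \<and> card S = n \<and> (\<forall>P \<in> S. length P = k) \<and>
           (n div k) ^ k \<le> card (voronoi_regions S k)"
proof -
  define m where "m = n div k"
  define K :: real where "K = 3 * real n + 2"
  define H :: real where "H = 4 * K + 1"
  define cur where "cur = (\<lambda>p. stair H k (xv k m p))"
  define S where "S = cur ` {..<n}"
  define F where "F = (\<lambda>t. stair H k (yv k m t))"
  define T where "T = {xs. set xs \<subseteq> {..<m} \<and> length xs = k}"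
  have k1: "k \<ge> 1" using k2 by simp
  have kmn: "k * m \<le> n" unfolding m_def by (simp add: mult.commute)
  have mn: "m \<le> n" unfolding m_def by simp
  have km1: "(k-1)*m \<le> n" proof -
    have "(k-1)*m \<le> k*m" by simp
    then show ?thesis using kmn by linarith
  qed
  have HK: "4 * K < H" unfolding H_def by simp
  have injc: "inj_on cur {..<n}"
  proof (rule inj_onI)
    fix p p' assume "cur p = cur p'"
    then have "\<forall>j<k. cur p ! j = cur p' ! j" by simp
    then have "\<forall>j<k. xv k m p j = xv k m p' j" unfolding cur_def by simp
    then show "p = p'" using xv_inj[OF k2] by blast
  qed
  have cardS: "card S = n" unfolding S_def using card_image[OF injc] by simp
  have lenS: "\<forall>P\<in>S. length P = k" unfolding S_def cur_def by auto
  have Tent: "\<And>t. t \<in> T \<Longrightarrow> \<forall>j<k. t!j < m"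
    unfolding T_def by (auto simp: subset_iff)
  have Tlen: "\<And>t. t \<in> T \<Longrightarrow> length t = k" unfolding T_def by auto
  have bnds: "\<And>t p. t \<in> T \<Longrightarrow> p < n \<Longrightarrow> \<forall>j<k. \<bar>xv k m p j\<bar> \<le> K \<and> \<bar>yv k m t j\<bar> \<le> K"
    unfolding K_def using xv_bound[OF _ mn] yv_bound[OF k2 Tent mn] by blast
  have NNiff: "\<And>t p. t \<in> T \<Longrightarrow> p < n \<Longrightarrow> cur p \<in> NN S (F t) \<longleftrightarrow> box k m p t"
  proof -
    fix t p assume t: "t \<in> T" and p: "p < n"
    have ent: "\<forall>j<k. t!j < m" using Tent[OF t] .
    have m1: "m \<ge> 1" proof -
      have "t!0 < m" using ent k1 by auto
      then show ?thesis by simp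
    qed
    have r0: "0 < rr k m t" using rr_bounds[OF k1 ent] by simp
    have low: "\<And>q. q < n \<Longrightarrow> rr k m t \<le> dfd (cur q) (F t)"
    proof -
      fix q assume q: "q < n"
      have "\<bar>xv k m q (k-1) - yv k m t (k-1)\<bar> \<le> dfd (cur q) (F t)"
        unfolding cur_def F_def using stair_lower[OF k1 bnds[OF t q] HK] k1 by simp
      moreover have "\<bar>xv k m q (k-1) - yv k m t (k-1)\<bar> = rr k m t"
        using xv_last0[OF k2] r0 unfolding yv_def by simp
      ultimately show "rr k m t \<le> dfd (cur q) (F t)" by simp
    qed
    have up: "\<And>q. box k m q t \<Longrightarrow> dfd (cur q) (F t) \<le> rr k m t"
      unfolding cur_def F_def box_def by (rule stair_upper[OF k1]) simp
    have b0: "box k m 0 t"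
      using box_L[OF k2 ent, of 0 0] k2 m1 by simp
    have "1 \<le> k * m" using k1 m1 by simp
    then have zn: "0 < n" using kmn by linarith
    show "cur p \<in> NN S (F t) \<longleftrightarrow> box k m p t"
    proof
      assume inn: "cur p \<in> NN S (F t)"
      show "box k m p t"
      proof (rule ccontr)
        assume nb: "\<not> box k m p t"
        then obtain j where j: "j < k" "rr k m t < \<bar>xv k m p j - yv k m t j\<bar>"
          unfolding box_def by force
        have "\<bar>xv k m p j - yv k m t j\<bar> \<le> dfd (cur p) (F t)"
          unfolding cur_def F_def using stair_lower[OF k1 bnds[OF t p] HK j(1)] by simp
        moreover have "dfd (cur p) (F t) \<le> dfd (cur 0) (F t)"
          using inn zn unfolding NN_def S_def by auto
        ultimately show False using up[OF b0] j(2) by linarith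
      qed
    next
      assume b: "box k m p t"
      have "\<forall>P'\<in>S. dfd (cur p) (F t) \<le> dfd P' (F t)"
        using up[OF b] low unfolding S_def by force
      then show "cur p \<in> NN S (F t)" unfolding NN_def S_def using p by auto
    qed
  qed
  have half: "\<And>t t' i. t \<in> T \<Longrightarrow> t' \<in> T \<Longrightarrow> NN S (F t) = NN S (F t') \<Longrightarrow> i < k \<Longrightarrow> t!i \<le> t'!i"
  proof -
    fix t t' i assume t: "t \<in> T" and t': "t' \<in> T" and eq: "NN S (F t) = NN S (F t')" and i: "i < k"
    have ent: "\<forall>j<k. t!j < m" and ent': "\<forall>j<k. t'!j < m" using Tent t t' by auto
    show "t!i \<le> t'!i"
    proof (cases "i < k - 1")
      case True
      have c: "t!i < m" using ent i by auto
      have pn: "i*m + t!i < n" using xv_L(1)[OF k2 True c] km1 by linarith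
      have "box k m (i*m + t!i) t" using box_L[OF k2 ent True c] by simp
      then have "cur (i*m + t!i) \<in> NN S (F t')" using NNiff[OF t pn] eq by simp
      then have "box k m (i*m + t!i) t'" using NNiff[OF t' pn] by simp
      then show ?thesis using box_L[OF k2 ent' True c] by simp
    next
      case False
      then have ii: "i = k - 1" using i by simp
      have c: "t!(k-1) < m" using ent k1 by auto
      have "(k-1)*m + t!(k-1) < (k-1)*m + m" using c by simp
      also have "\<dots> = k * m" using k1 by (cases k) auto
      finally have pn: "(k-1)*m + t!(k-1) < n" using kmn by linarith
      have "box k m ((k-1)*m + t!(k-1)) t" using box_R[OF k2 ent c] by simp
      then have "cur ((k-1)*m + t!(k-1)) \<in> NN S (F t')" using NNiff[OF t pn] eq by simp
      then have "box k m ((k-1)*m + t!(k-1)) t'" using NNiff[OF t' pn] by simp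
      then show ?thesis using box_R[OF k2 ent' c] ii by simp
    qed
  qed
  have inj: "inj_on (\<lambda>t. NN S (F t)) T"
  proof (rule inj_onI)
    fix t t' assume t: "t \<in> T" and t': "t' \<in> T" and eq: "NN S (F t) = NN S (F t')"
    show "t = t'"
    proof (rule nth_equalityI)
      show "length t = length t'" using Tlen[OF t] Tlen[OF t'] by simp
      fix i assume "i < length t"
      then have i: "i < k" using Tlen[OF t] by simp
      show "t!i = t'!i" using half[OF t t' eq i] half[OF t' t eq[symmetric] i] by simp
    qed
  qed
  have cT: "card T = m ^ k" unfolding T_def using card_lists_length_eq[of "{..<m}" k] by simp
  have "card T \<le> card (voronoi_regions S k)"
    by (rule count_regions[OF _ _ inj]) (auto simp: S_def F_def)
  then show ?thesis using cardS lenS cT unfolding m_def by (intro exI[of _ S]) (auto simp: S_def)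
qed


theorem lemma1:
  fixes n k :: nat
  assumes "k \<ge> 1"
  shows "\<exists>S :: curve set. finite S \<and> card S = n \<and> (\<forall>P \<in> S. length P = k) \<and>
           (n div k) ^ k \<le> card (voronoi_regions S k)"
proof (cases "k = 1")
  case True
  then show ?thesis using case_k1[of n] by simp
next
  case False
  then have "k \<ge> 2" using assms by simp
  then show ?thesis by (rule case_k2)
qed

end
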